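(* Let $f:[0,1]\to\mathbb{R}$ with $f(0),f(1)\in\mathbb{Z}$, let $n\in\mathbb{N}_+$, $n\ge 2$, and let $\Phi_n:[0,1]\to\mathbb{R}$ satisfy \[ \Phi_n\left(\tfrac{2}{n}\right)-2\Phi_n\left(\tfrac{1}{n}\right)+\Phi_n(0)\ge\binom{n}{2}^{-1}, \] \[ \Phi_n\left(\tfrac{k+2}{n}\right)-2\Phi_n\left(\tfrac{k+1}{n}\right)+\Phi_n\left(\tfrac{k}{n}\right)\ge\binom{n}{k}^{-1}+\binom{n}{k+2}^{-1},\quad k=1,\dots,n-3 \ (\text{when } n\ge 4), \] \[ \Phi_n(1)-2\Phi_n\left(\tfrac{n-1}{n}\right)+\Phi_n\left(\tfrac{n-2}{n}\right)\ge\binom{n}{n-2}^{-1}. \] If $f(x)-\Phi_n(x)$ is convex on $[0,1]$, then $\widetilde{B}_n(f)$ is convex on $[0,1]$.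
   Context: For $n\in\mathbb{N}_+$ and $f:[0,1]\to\mathbb{R}$, $\widetilde{B}_n(f)(x):=\sum_{k=0}^n \left[f\left(\frac{k}{n}\right)\binom{n}{k}\right]x^k(1-x)^{n-k}$, where $[\alpha]$ is the largest integer $\le\alpha$. *)

theory Defs
  imports "HOL-Analysis.Analysis"
begin

definition Btilde :: "nat \<Rightarrow> (real \<Rightarrow> real) \<Rightarrow> real \<Rightarrow> real" where
  "Btilde n f x = (\<Sum>k=0..n. of_int \<lfloor>f (real k / real n) * real (n choose k)\<rfloor>
                       * x ^ k * (1 - x) ^ (n - k))"

end

theory Submission
  imports Defs
begin

lemma Bernstein_deriv:
  assumes "k \<le> n" "n \<ge> 1"
  shows "(Bernstein n k has_real_derivative
     real n * ((if k = 0 then 0 else Bernstein (n-1) (k-1) x) - Bernstein (n-1) k x)) (at x)"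
proof -
  have D: "(Bernstein n k has_real_derivative
     real (n choose k) * (real k * x^(k-1)) * (1-x)^(n-k) + real (n choose k) * x^k * (real (n-k) * (1-x)^(n-k-1) * (-1))) (at x)"
    unfolding Bernstein_def[abs_def]
    by (auto intro!: derivative_eq_intros)
  have c2: "real (n-k) * real (n choose k) = real n * real ((n-1) choose k)"
    using binomial_absorb_comp[of n k] by (metis of_nat_mult)
  have e2: "n - k - 1 = n - 1 - k" by simp
  show ?thesis
  proof (cases k)
    case 0
    then show ?thesis using D c2 assms by (simp add: Bernstein_def algebra_simps)
  next
    case (Suc j)
    have c1: "real (Suc j) * real (n choose Suc j) = real n * real ((n-1) choose j)"
      using binomial_absorption[of j n] by (metis of_nat_mult)
    have e1: "n - Suc j = n - 1 - j" by simp
    have "real (n choose k) * (real k * x^(k-1)) * (1-x)^(n-k) + real (n choose k) * x^k * (real (n-k) * (1-x)^(n-k-1) * (-1))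
        = (real k * real (n choose k)) * x^(k-1) * (1-x)^(n-k) - (real (n-k) * real (n choose k)) * x^k * (1-x)^(n-k-1)"
      by (simp add: algebra_simps)
    also have "\<dots> = real n * (Bernstein (n-1) (k-1) x - Bernstein (n-1) k x)"
      unfolding c2 e2 using c1 e1 Suc by (simp add: Bernstein_def algebra_simps)
    finally show ?thesis using D Suc by simp
  qed
qed

definition bern :: "nat \<Rightarrow> (nat \<Rightarrow> real) \<Rightarrow> real \<Rightarrow> real" where
  "bern n c x = (\<Sum>k\<le>n. c k * Bernstein n k x)"

lemma bern_deriv:
  assumes "n \<ge> 1"
  shows "(bern n c has_real_derivative real n * bern (n-1) (\<lambda>k. c (Suc k) - c k) x) (at x)"
proof -
  obtain p where p: "n = Suc p" using assms by (cases n) auto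
  have D: "(bern n c has_real_derivative
      (\<Sum>k\<le>n. c k * (real n * ((if k = 0 then 0 else Bernstein (n-1) (k-1) x) - Bernstein (n-1) k x)))) (at x)"
    unfolding bern_def[abs_def]
    by (rule DERIV_sum, rule DERIV_cmult, rule Bernstein_deriv, use assms in auto)
  have "(\<Sum>k\<le>n. c k * (real n * ((if k = 0 then 0 else Bernstein (n-1) (k-1) x) - Bernstein (n-1) k x)))
     = real n * ((\<Sum>k\<le>n. c k * (if k = 0 then 0 else Bernstein (n-1) (k-1) x)) - (\<Sum>k\<le>n. c k * Bernstein (n-1) k x))"
    by (simp add: sum_distrib_left algebra_simps sum_subtractf)
  also have "(\<Sum>k\<le>n. c k * (if k = 0 then 0 else Bernstein (n-1) (k-1) x)) = (\<Sum>k\<le>p. c (Suc k) * Bernstein p k x)"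
    unfolding p by (subst sum.atMost_Suc_shift) simp
  also have "(\<Sum>k\<le>n. c k * Bernstein (n-1) k x) = (\<Sum>k\<le>p. c k * Bernstein p k x)"
    unfolding p by (simp add: Bernstein_def)
  finally have E: "(\<Sum>k\<le>n. c k * (real n * ((if k = 0 then 0 else Bernstein (n-1) (k-1) x) - Bernstein (n-1) k x)))
     = real n * ((\<Sum>k\<le>p. c (Suc k) * Bernstein p k x) - (\<Sum>k\<le>p. c k * Bernstein p k x))" .
  have F: "bern (n-1) (\<lambda>k. c (Suc k) - c k) x = (\<Sum>k\<le>p. c (Suc k) * Bernstein p k x) - (\<Sum>k\<le>p. c k * Bernstein p k x)"
    by (simp add: bern_def p left_diff_distrib sum_subtractf)
  show ?thesis using D unfolding E F .
qed


theorem proposition3p1: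
  fixes f \<Phi> :: "real \<Rightarrow> real" and n :: nat
  assumes f0: "f 0 \<in> \<int>" and f1: "f 1 \<in> \<int>"
    and n2: "n \<ge> 2"
    and first: "\<Phi> (2 / real n) - 2 * \<Phi> (1 / real n) + \<Phi> 0 \<ge> 1 / real (n choose 2)"
    and middle: "\<And>k. 1 \<le> k \<Longrightarrow> k + 3 \<le> n \<Longrightarrow>
        \<Phi> (real (k + 2) / real n) - 2 * \<Phi> (real (k + 1) / real n) + \<Phi> (real k / real n)
          \<ge> 1 / real (n choose k) + 1 / real (n choose (k + 2))"
    and last: "\<Phi> 1 - 2 * \<Phi> (real (n - 1) / real n) + \<Phi> (real (n - 2) / real n)
          \<ge> 1 / real (n choose (n - 2))"
    and conv: "convex_on {0..1} (\<lambda>x. f x - \<Phi> x)"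
  shows "convex_on {0..1} (Btilde n f)"
proof -
  define C where "C k = real (n choose k)" for k
  define F where "F k = f (real k / real n)" for k
  define P where "P k = \<Phi> (real k / real n)" for k
  define a where "a k = of_int \<lfloor>F k * C k\<rfloor> / C k" for k
  define d where "d k = F k - a k" for k
  have npos: "real n > 0" using n2 by simp
  have Cpos: "C k > 0" if "k \<le> n" for k using that by (simp add: C_def)
  have dbound: "0 \<le> d k \<and> d k \<le> 1 / C k" if "k \<le> n" for k
  proof -
    have c: "C k > 0" using Cpos that .
    have e: "d k = (F k * C k - of_int \<lfloor>F k * C k\<rfloor>) / C k"
      using c by (simp add: d_def a_def field_simps)
    have "0 \<le> F k * C k - of_int \<lfloor>F k * C k\<rfloor>" "F k * C k - of_int \<lfloor>F k * C k\<rfloor> \<le> 1"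
      by linarith+
    then show ?thesis unfolding e using c by (simp add: divide_right_mono)
  qed
  have d0: "d 0 = 0"
  proof -
    obtain m where "f 0 = of_int m" using f0 Ints_cases by blast
    then show ?thesis by (simp add: d_def a_def F_def C_def)
  qed
  have dn: "d n = 0"
  proof -
    obtain m where "f 1 = of_int m" using f1 Ints_cases by blast
    then show ?thesis using npos by (simp add: d_def a_def F_def C_def)
  qed
  have convk: "F (k+2) - 2 * F (k+1) + F k \<ge> P (k+2) - 2 * P (k+1) + P k" if "k + 2 \<le> n" for k
  proof -
    have m: "(1 - 1/2) *\<^sub>R (real k / real n) + (1/2) *\<^sub>R (real (k+2) / real n) = real (k+1) / real n"
      using npos by (simp add: field_simps)
    have i1: "real k / real n \<in> {0..1}" and i2: "real (k+2) / real n \<in> {0..1}"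
      using that npos by (auto simp: field_simps)
    have "f (real (k+1) / real n) - \<Phi> (real (k+1) / real n)
        \<le> (1 - 1/2) * (f (real k / real n) - \<Phi> (real k / real n)) + 1/2 * (f (real (k+2) / real n) - \<Phi> (real (k+2) / real n))"
      using convex_onD[OF conv, of "1/2", OF _ _ i1 i2] unfolding m by simp
    then show ?thesis unfolding F_def P_def by (simp add: field_simps)
  qed
  have bound: "P (k+2) - 2 * P (k+1) + P k \<ge> d (k+2) + d k" if "k + 2 \<le> n" for k
  proof (cases "k = 0")
    case True
    have "d (Suc (Suc 0)) \<le> 1 / C 2" using dbound n2 by (simp add: numeral_2_eq_2)
    then show ?thesis using True first d0 by (simp add: P_def C_def)
  next
    case k: False
    show ?thesis
    proof (cases "k + 2 = n")
      case True
      have "d k \<le> 1 / C k" using dbound that by simp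
      moreover have "real (k+2) / real n = 1" "real (k+1) = real (n - 1)" "k = n - 2"
        using True npos by auto
      ultimately show ?thesis using last dn True by (simp add: P_def C_def)
    next
      case False
      have "d k \<le> 1 / C k" "d (k+2) \<le> 1 / C (k+2)" using dbound that by simp_all
      moreover have "P (k+2) - 2 * P (k+1) + P k \<ge> 1 / C k + 1 / C (k+2)"
        using middle[of k] k False that by (simp add: P_def C_def)
      ultimately show ?thesis by linarith
    qed
  qed
  have dd: "a (Suc (Suc k)) - a (Suc k) - (a (Suc k) - a k) \<ge> 0" if "k \<le> n - 2" for k
  proof -
    have "k + 2 \<le> n" using that n2 by simp
    from convk[OF this] bound[OF this] dbound[of "k+1"] this
    show ?thesis by (simp add: d_def)
  qed
  have B: "Btilde n f = bern n a"
  proof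
    fix x
    show "Btilde n f x = bern n a x"
      unfolding Btilde_def bern_def atMost_atLeast0
    proof (rule sum.cong)
      fix k assume "k \<in> {0..n}"
      then have "C k > 0" using Cpos by simp
      then show "of_int \<lfloor>f (real k / real n) * real (n choose k)\<rfloor> * x ^ k * (1 - x) ^ (n - k) = a k * Bernstein n k x"
        by (simp add: a_def F_def C_def Bernstein_def)
    qed simp
  qed
  show ?thesis
    unfolding B
  proof (rule f''_ge0_imp_convex)
    show "convex {0..1::real}" by simp
    fix x :: real
    show "(bern n a has_real_derivative real n * bern (n-1) (\<lambda>k. a (Suc k) - a k) x) (at x)"
      by (rule bern_deriv) (use n2 in simp)
    show "((\<lambda>x. real n * bern (n-1) (\<lambda>k. a (Suc k) - a k) x) has_real_derivative
        real n * (real (n-1) * bern (n-1-1) (\<lambda>k. (a (Suc (Suc k)) - a (Suc k)) - (a (Suc k) - a k)) x)) (at x)"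
      by (rule DERIV_cmult, rule bern_deriv) (use n2 in simp)
    assume x: "x \<in> {0..1}"
    have "bern (n-1-1) (\<lambda>k. (a (Suc (Suc k)) - a (Suc k)) - (a (Suc k) - a k)) x \<ge> 0"
      unfolding bern_def using x dd
      by (intro sum_nonneg mult_nonneg_nonneg) (auto intro: Bernstein_nonneg)
    then show "real n * (real (n-1) * bern (n-1-1) (\<lambda>k. (a (Suc (Suc k)) - a (Suc k)) - (a (Suc k) - a k)) x) \<ge> 0"
      by simp
  qed
qed

end
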